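(* Let $G$ be a strongly connected digraph with at least one arc (loops and multiple arcs allowed). Then $D(LG)=D(G)$ if and only if $G$ is a directed cycle.
   Context: Digraphs are finite and may have loops and multiple arcs. For vertices $u,v$, $\mathrm{dist}_G(u,v)$ is the length of a shortest directed walk from $u$ to $v$ (so $\mathrm{dist}_G(u,u)=0$). $G$ is strongly connected if $\mathrm{dist}_G(u,v)<\infty$ for all $u,v$, and its diameter is $D(G)=\max_{u,v}\mathrm{dist}_G(u,v)$. The line digraph $LG$ has as vertex set the set of arcs of $G$, with an arc from $e$ to $f$ whenever the head (final vertex) of $e$ equals the tail (initial vertex) of $f$. A directed cycle is a digraph with vertices $v_0,\dots,v_{n-1}$ ($n\ge1$) and exactly the arcs $(v_i,v_{i+1 \bmod n})$. *)

theory Defs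
  imports "Graph_Theory.Graph_Theory" "HOL-Library.Extended_Nat"
begin

definition gdist :: "('a,'b) pre_digraph \<Rightarrow> 'a \<Rightarrow> 'a \<Rightarrow> enat" where
  "gdist G u v = (INF p \<in> {p. pre_digraph.awalk G u p v}. enat (length p))"

definition diameter :: "('a,'b) pre_digraph \<Rightarrow> enat" where
  "diameter G = (SUP u \<in> verts G. SUP v \<in> verts G. gdist G u v)"

definition line_digraph :: "('a,'b) pre_digraph \<Rightarrow> ('b, 'b \<times> 'b) pre_digraph" where
  "line_digraph G = \<lparr> verts = arcs G,
     arcs = {(e,f). e \<in> arcs G \<and> f \<in> arcs G \<and> head G e = tail G f},
     tail = fst, head = snd \<rparr>"

definition directed_cycle :: "('a,'b) pre_digraph \<Rightarrow> bool" where
  "directed_cycle G \<longleftrightarrow> (\<exists>n \<ge> 1. \<exists>vs es.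
      bij_betw vs {0..<n} (verts G) \<and> bij_betw es {0..<n} (arcs G) \<and>
      (\<forall>i<n. tail G (es i) = vs i \<and> head G (es i) = vs (Suc i mod n)))"

end

theory Submission
  imports Defs
begin


lemma enat_Suc1: "enat (Suc n) = 1 + enat n"
  by (simp add: eSuc_enat[symmetric] plus_1_eSuc(1))

lemma enat_Suc_not_le: "1 + enat d \<le> enat d \<Longrightarrow> False"
  by (metis enat_Suc1 enat_ord_simps(1) Suc_n_not_le_n)

lemma gdist_le:
  assumes "pre_digraph.awalk H u p v"
  shows "gdist H u v \<le> enat (length p)"
  unfolding gdist_def using assms by (intro INF_lower2[of p]) auto

lemma gdist_obtain:
  assumes "gdist H u v \<noteq> \<infinity>"
  shows "\<exists>p. pre_digraph.awalk H u p v \<and> gdist H u v = enat (length p)"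
proof -
  define S where "S = {p. pre_digraph.awalk H u p v}"
  define f where "f = (\<lambda>p::'b list. enat (length p))"
  have g: "gdist H u v = Inf (f ` S)" unfolding gdist_def S_def f_def by (rule refl)
  obtain p0 where p0: "p0 \<in> S"
  proof (cases "S = {}")
    case True
    then have "gdist H u v = \<infinity>" unfolding g by (simp add: top_enat_def)
    with assms show ?thesis by simp
  qed blast
  then have ne2: "f ` S \<noteq> {}" by blast
  have "Inf (f ` S) = (LEAST x. x \<in> f ` S)" unfolding Inf_enat_def using ne2 by (rule if_not_P)
  moreover have "(LEAST x. x \<in> f ` S) \<in> f ` S" by (rule LeastI[of _ "f p0"]) (rule imageI[OF p0])
  ultimately have "gdist H u v \<in> f ` S" using g by simp
  then obtain p where "p \<in> S" "gdist H u v = f p" by blast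
  then show ?thesis unfolding S_def f_def by blast
qed

lemma gdist_refl:
  assumes "u \<in> verts H" shows "gdist H u u = 0"
proof -
  have "pre_digraph.awalk H u [] u" using assms by (simp add: pre_digraph.awalk_def pre_digraph.cas.simps)
  from gdist_le[OF this] have "gdist H u u \<le> enat 0" by simp
  then show ?thesis by (simp add: enat_0)
qed

lemma gdist_zero:
  assumes "gdist H u v = 0" shows "u = v"
proof -
  obtain p where "pre_digraph.awalk H u p v" "gdist H u v = enat (length p)"
    using gdist_obtain[of H u v] assms by auto
  then show ?thesis using assms by (auto simp: zero_enat_def pre_digraph.awalk_def pre_digraph.cas.simps)
qed

lemma line_simps[simp]:
  "verts (line_digraph G) = arcs G"
  "arcs (line_digraph G) = {(e,f). e \<in> arcs G \<and> f \<in> arcs G \<and> head G e = tail G f}"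
  "tail (line_digraph G) = fst" "head (line_digraph G) = snd"
  by (simp_all add: line_digraph_def)

lemma LtoG:
  assumes "pre_digraph.cas (line_digraph G) e p f" "set p \<subseteq> arcs (line_digraph G)" "p \<noteq> []"
  shows "pre_digraph.cas G (head G e) (map snd (butlast p)) (tail G f) \<and> set (map snd (butlast p)) \<subseteq> arcs G"
  using assms
proof (induction p arbitrary: e)
  case Nil then show ?case by simp
next
  case (Cons a q)
  obtain x y where a: "a = (x,y)" by force
  show ?case
  proof (cases "q = []")
    case True
    then have "a = (e, f)" "head G e = tail G f" using Cons.prems a by (auto simp: pre_digraph.cas.simps)
    then show ?thesis using True by (simp add: pre_digraph.cas.simps)
  next
    case False
    have c: "pre_digraph.cas (line_digraph G) y q f" and x: "x = e"
      using Cons.prems a by (auto simp: pre_digraph.cas.simps)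
    have IH: "pre_digraph.cas G (head G y) (map snd (butlast q)) (tail G f) \<and> set (map snd (butlast q)) \<subseteq> arcs G"
      using Cons.IH[OF c] Cons.prems False by auto
    have "head G e = tail G y" "y \<in> arcs G" using Cons.prems a x by auto
    moreover have "map snd (butlast (a # q)) = y # map snd (butlast q)" using False a by simp
    ultimately show ?thesis using IH by (simp add: pre_digraph.cas.simps)
  qed
qed

lemma GtoL:
  assumes "pre_digraph.cas G (head G e) q (tail G f)" "set q \<subseteq> arcs G" "e \<in> arcs G" "f \<in> arcs G"
  shows "pre_digraph.awalk (line_digraph G) e (zip (e#q) (q@[f])) f"
  using assms
proof (induction q arbitrary: e)
  case Nil then show ?case by (auto simp: pre_digraph.awalk_def pre_digraph.cas.simps)
next
  case (Cons g q)
  have "pre_digraph.awalk (line_digraph G) g (zip (g#q) (q@[f])) f"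
    using Cons by (auto simp: pre_digraph.cas.simps)
  then show ?case using Cons.prems by (auto simp: pre_digraph.awalk_def pre_digraph.cas.simps)
qed

lemma gdist_L_upper:
  assumes "e \<in> arcs G" "f \<in> arcs G"
  shows "gdist (line_digraph G) e f \<le> 1 + gdist G (head G e) (tail G f)"
proof (cases "gdist G (head G e) (tail G f) = \<infinity>")
  case True then show ?thesis by (simp only: plus_enat_simps(3) enat_ord_simps(3))
next
  case False
  then obtain q where q: "pre_digraph.awalk G (head G e) q (tail G f)"
      "gdist G (head G e) (tail G f) = enat (length q)" using gdist_obtain[OF False] by blast
  have "pre_digraph.awalk (line_digraph G) e (zip (e#q) (q@[f])) f"
    using q assms by (intro GtoL) (auto simp: pre_digraph.awalk_def)
  from gdist_le[OF this] have "gdist (line_digraph G) e f \<le> enat (Suc (length q))" by simp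
  also have "\<dots> = 1 + gdist G (head G e) (tail G f)" using q(2) by (simp only: enat_Suc1)
  finally show ?thesis .
qed

lemma gdist_L_lower:
  assumes "wf_digraph G" "e \<in> arcs G" "f \<in> arcs G" "e \<noteq> f"
  shows "1 + gdist G (head G e) (tail G f) \<le> gdist (line_digraph G) e f"
proof (cases "gdist (line_digraph G) e f = \<infinity>")
  case True then show ?thesis by (simp only: enat_ord_simps(3))
next
  case False
  then obtain p where p: "pre_digraph.awalk (line_digraph G) e p f"
      "gdist (line_digraph G) e f = enat (length p)" using gdist_obtain[OF False] by blast
  have "p \<noteq> []" using p assms(4) by (auto simp: pre_digraph.awalk_def pre_digraph.cas.simps)
  then have c: "pre_digraph.cas G (head G e) (map snd (butlast p)) (tail G f) \<and> set (map snd (butlast p)) \<subseteq> arcs G"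
    using p by (intro LtoG) (auto simp: pre_digraph.awalk_def)
  have "head G e \<in> verts G" using assms wf_digraph.head_in_verts by metis
  then have "pre_digraph.awalk G (head G e) (map snd (butlast p)) (tail G f)"
    using c by (simp add: pre_digraph.awalk_def)
  from gdist_le[OF this] have "gdist G (head G e) (tail G f) \<le> enat (length p - 1)" by simp
  then have "1 + gdist G (head G e) (tail G f) \<le> 1 + enat (length p - 1)" by (rule add_left_mono)
  also have "\<dots> = enat (length p)" using \<open>p \<noteq> []\<close> by (cases p) (blast, simp only: enat_Suc1 list.size add_Suc_right add_0_right diff_Suc_1)
  finally show ?thesis using p by simp
qed



lemma Sup_in_enat: "finite (A::enat set) \<Longrightarrow> A \<noteq> {} \<Longrightarrow> Sup A \<in> A"
  by (metis Max_in cSup_eq_Max)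

lemma diam_upper: "u \<in> verts H \<Longrightarrow> v \<in> verts H \<Longrightarrow> gdist H u v \<le> diameter H"
  unfolding diameter_def by (meson SUP_upper2 SUP_upper)

lemma diam_least: "(\<And>u v. u \<in> verts H \<Longrightarrow> v \<in> verts H \<Longrightarrow> gdist H u v \<le> d) \<Longrightarrow> diameter H \<le> d"
  unfolding diameter_def by (meson SUP_least)

lemma diam_attained:
  assumes "finite (verts H)" "verts H \<noteq> {}"
  shows "\<exists>u\<in>verts H. \<exists>v\<in>verts H. gdist H u v = diameter H"
proof -
  have inner: "\<forall>u\<in>verts H. \<exists>v\<in>verts H. gdist H u v = (SUP v\<in>verts H. gdist H u v)"
  proof
    fix u assume "u \<in> verts H"
    have "(SUP v\<in>verts H. gdist H u v) \<in> (\<lambda>v. gdist H u v) ` verts H"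
      using assms by (intro Sup_in_enat) auto
    then show "\<exists>v\<in>verts H. gdist H u v = (SUP v\<in>verts H. gdist H u v)" by auto
  qed
  have "diameter H \<in> (\<lambda>u. SUP v\<in>verts H. gdist H u v) ` verts H"
    unfolding diameter_def using assms by (intro Sup_in_enat) auto
  then show ?thesis using inner by fastforce
qed

locale sc = fin_digraph +
  assumes sc: "strongly_connected G" and ne: "arcs G \<noteq> {}"
begin

lemma gdist_fin: "u \<in> verts G \<Longrightarrow> v \<in> verts G \<Longrightarrow> gdist G u v \<noteq> \<infinity>"
proof -
  assume "u \<in> verts G" "v \<in> verts G"
  then have "u \<rightarrow>\<^sup>* v" using sc unfolding strongly_connected_def by auto
  then obtain p where "awalk u p v" using reachable_awalk by auto
  from gdist_le[OF this] show ?thesis by (metis enat_ord_simps(5) infinity_ileE)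
qed

lemma verts_ne: "verts G \<noteq> {}" using sc unfolding strongly_connected_def by auto

lemma diam_att: "\<exists>u\<in>verts G. \<exists>v\<in>verts G. gdist G u v = diameter G"
  using diam_attained[OF finite_verts verts_ne] .

lemma diam_fin: "diameter G \<noteq> \<infinity>"
proof -
  obtain u v where "u \<in> verts G" "v \<in> verts G" "gdist G u v = diameter G" using diam_att by blast
  then show ?thesis using gdist_fin by metis
qed

lemma gdist_walk: "u \<in> verts G \<Longrightarrow> v \<in> verts G \<Longrightarrow> \<exists>p. awalk u p v \<and> gdist G u v = enat (length p)"
  by (rule gdist_obtain[OF gdist_fin])

definition "outu \<longleftrightarrow> (\<forall>x\<in>verts G. \<exists>!a. a \<in> arcs G \<and> tail G a = x)"
definition "inu \<longleftrightarrow> (\<forall>x\<in>verts G. \<exists>!a. a \<in> arcs G \<and> head G a = x)"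

lemma dist_step:
  assumes ou: outu and e: "e \<in> arcs G" and y: "y \<in> verts G" and ne: "y \<noteq> tail G e"
  shows "gdist G (tail G e) y = 1 + gdist G (head G e) y"
proof (rule antisym)
  obtain q where q: "awalk (head G e) q y" "gdist G (head G e) y = enat (length q)"
    using gdist_walk[OF head_in_verts[OF e] y] by blast
  have "awalk (tail G e) (e#q) y" using q e by (simp add: awalk_Cons_iff)
  from gdist_le[OF this] show "gdist G (tail G e) y \<le> 1 + gdist G (head G e) y"
    using q by (simp add: enat_Suc1)
next
  obtain p where p: "awalk (tail G e) p y" "gdist G (tail G e) y = enat (length p)"
    using gdist_walk[OF tail_in_verts[OF e] y] by blast
  then obtain g p' where gp: "p = g # p'" using ne by (cases p) (auto simp: awalk_Nil_iff)
  have g: "g \<in> arcs G" "tail G g = tail G e" "awalk (head G g) p' y" using p gp by (auto simp: awalk_Cons_iff)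
  have "\<exists>!a. a \<in> arcs G \<and> tail G a = tail G e" using ou tail_in_verts[OF e] unfolding outu_def by blast
  then have "g = e" using g e by blast
  from gdist_le[OF g(3)[unfolded this]] have "gdist G (head G e) y \<le> enat (length p')" .
  then have "1 + gdist G (head G e) y \<le> 1 + enat (length p')" by (rule add_left_mono)
  moreover have "enat (length p) = 1 + enat (length p')" using gp by (simp add: enat_Suc1)
  ultimately show "1 + gdist G (head G e) y \<le> gdist G (tail G e) y" using p(2) by simp
qed

lemma distL_eq:
  assumes ou: outu and e: "e \<in> arcs G" and f: "f \<in> arcs G"
  shows "gdist (line_digraph G) e f = gdist G (tail G e) (tail G f)"
proof (cases "e = f")
  case True
  have "gdist (line_digraph G) e e = 0" using e by (intro gdist_refl) simp
  moreover have "gdist G (tail G e) (tail G e) = 0" using e by (intro gdist_refl) simp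
  ultimately show ?thesis using True by simp
next
  case False
  have "\<exists>!a. a \<in> arcs G \<and> tail G a = tail G e" using ou tail_in_verts[OF e] unfolding outu_def by blast
  then have ne: "tail G f \<noteq> tail G e" using e f False by blast
  have "gdist (line_digraph G) e f = 1 + gdist G (head G e) (tail G f)"
    using gdist_L_upper[OF e f] gdist_L_lower[OF wf_digraph e f False] by (rule antisym)
  also have "\<dots> = gdist G (tail G e) (tail G f)" using dist_step[OF ou e _ ne] f by simp
  finally show ?thesis .
qed

lemma partIII:
  assumes ou: outu
  shows "diameter (line_digraph G) = diameter G"
proof (rule antisym)
  show "diameter (line_digraph G) \<le> diameter G"
  proof (rule diam_least)
    fix e f assume "e \<in> verts (line_digraph G)" "f \<in> verts (line_digraph G)"
    then have ef: "e \<in> arcs G" "f \<in> arcs G" by auto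
    have "gdist G (tail G e) (tail G f) \<le> diameter G" using ef by (intro diam_upper) auto
    then show "gdist (line_digraph G) e f \<le> diameter G" using distL_eq[OF ou ef] by simp
  qed
next
  show "diameter G \<le> diameter (line_digraph G)"
  proof (rule diam_least)
    fix u v assume u: "u \<in> verts G" and v: "v \<in> verts G"
    obtain e where e: "e \<in> arcs G" "tail G e = u" using ou u unfolding outu_def by blast
    obtain f where f: "f \<in> arcs G" "tail G f = v" using ou v unfolding outu_def by blast
    have "gdist G u v = gdist (line_digraph G) e f" using distL_eq[OF ou e(1) f(1)] e f by simp
    also have "\<dots> \<le> diameter (line_digraph G)" using e f by (intro diam_upper) auto
    finally show "gdist G u v \<le> diameter (line_digraph G)" .
  qed
qed

end

context sc begin


lemma cas_ends: "cas u p v \<Longrightarrow> p \<noteq> [] \<Longrightarrow> tail G (hd p) = u \<and> head G (last p) = v"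
  by (induction p arbitrary: u) (auto simp: cas.simps)

lemma awalk_snoc: "awalk u p v \<Longrightarrow> g \<in> arcs G \<Longrightarrow> tail G g = v \<Longrightarrow> awalk u (p@[g]) (head G g)"
  unfolding awalk_def by (induction p arbitrary: u) (auto simp: cas.simps)

lemma awalk_unsnoc: "awalk u (p@[g]) v \<Longrightarrow> awalk u p (tail G g) \<and> g \<in> arcs G \<and> head G g = v"
  unfolding awalk_def by (induction p arbitrary: u) (auto simp: cas.simps)

lemma partIV:
  assumes eq: "diameter (line_digraph G) = diameter G"
  shows "outu \<and> inu"
proof -
  obtain d where D: "diameter G = enat d" using diam_fin by auto
  have K: "1 + gdist G (head G e) (tail G f) \<le> enat d" if "e \<in> arcs G" "f \<in> arcs G" "e \<noteq> f" for e f
  proof -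
    have "1 + gdist G (head G e) (tail G f) \<le> gdist (line_digraph G) e f"
      using gdist_L_lower[OF wf_digraph that] .
    also have "\<dots> \<le> diameter (line_digraph G)" using that by (intro diam_upper) auto
    finally show ?thesis using eq D by simp
  qed
  show ?thesis
  proof (cases "d = 0")
    case True
    have vv: "u = v" if "u \<in> verts G" "v \<in> verts G" for u v
    proof -
      have "gdist G u v \<le> enat d" using diam_upper[OF that] D by simp
      then have "gdist G u v = 0" using True by (metis le_zero_eq zero_enat_def)
      then show ?thesis by (rule gdist_zero)
    qed
    have aa: "e = f" if "e \<in> arcs G" "f \<in> arcs G" for e f
    proof (rule ccontr)
      assume "e \<noteq> f"
      from K[OF that this] True show False
        by (metis add_eq_0_iff_both_eq_0 le_zero_eq one_neq_zero zero_enat_def)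
    qed
    obtain a where a: "a \<in> arcs G" using ne by auto
    show ?thesis unfolding outu_def inu_def
      using a aa vv tail_in_verts head_in_verts by metis
  next
    case False
    define P where "P x y \<longleftrightarrow> x \<in> verts G \<and> y \<in> verts G \<and> gdist G x y = enat d" for x y
    have FA: "e = f" if "P x y" "e \<in> arcs G" "f \<in> arcs G" "head G e = x" "tail G f = y" for x y e f
    proof (rule ccontr)
      assume "e \<noteq> f"
      from K[OF that(2,3) this] that(1,4,5) show False unfolding P_def
        by (simp add: enat_Suc1)
    qed
    have FB: "x \<noteq> y" if "P x y" for x y
      using that False gdist_refl[of x G] unfolding P_def by (auto simp: zero_enat_def)
    have FC: "\<exists>a. a \<in> arcs G \<and> tail G a = y \<and> head G a = x" if "P x y" for x y
    proof -
      have "y \<rightarrow>\<^sup>* x" using sc that unfolding strongly_connected_def P_def by auto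
      then obtain q where q: "awalk y q x" using reachable_awalk by auto
      have "q \<noteq> []" using q FB[OF that] by (auto simp: awalk_Nil_iff)
      then have "tail G (hd q) = y" "head G (last q) = x" "hd q \<in> arcs G" "last q \<in> arcs G"
        using q cas_ends unfolding awalk_def by auto
      then show ?thesis using FA[OF that, of "last q" "hd q"] by metis
    qed
    have Step: "\<exists>z. P y z \<and> (\<exists>g. g \<in> arcs G \<and> tail G g = z \<and> head G g = y)" if Pxy: "P x y" for x y
    proof -
      have xyv: "x \<in> verts G" "y \<in> verts G" using Pxy unfolding P_def by auto
      obtain p where p: "awalk x p y" "gdist G x y = enat (length p)"
        using gdist_walk[OF xyv] by blast
      have lp: "length p = d" using p Pxy unfolding P_def by simp
      then have "p \<noteq> []" using False by auto
      then obtain p' g where pg: "p = p' @ [g]" by (metis rev_exhaust)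
      define z where "z = tail G g"
      have w: "awalk x p' z" "g \<in> arcs G" "head G g = y" using awalk_unsnoc p(1) pg z_def by auto
      have yz: "y \<noteq> z"
      proof
        assume "y = z"
        from gdist_le[OF w(1)[folded this]] have "gdist G x y \<le> enat (length p')" .
        then show False using p lp pg by simp
      qed
      have zv: "z \<in> verts G" and yv: "y \<in> verts G" using w z_def Pxy unfolding P_def by auto
      obtain q where q: "awalk y q z" "gdist G y z = enat (length q)" using gdist_walk yv zv by auto
      then obtain h q' where hq: "q = h # q'" using yz by (cases q) (auto simp: awalk_Nil_iff)
      have h: "h \<in> arcs G" "tail G h = y" "awalk (head G h) q' z" using q hq by (auto simp: awalk_Cons_iff)
      obtain a where a: "a \<in> arcs G" "tail G a = y" "head G a = x" using FC[OF Pxy] by auto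
      have "h = a" using FA[OF Pxy a(1) h(1) a(3) h(2)] by simp
      then have "awalk x q' z" using h a by simp
      then have "awalk x (q' @ [g]) y" using awalk_snoc w z_def by metis
      from gdist_le[OF this] have "enat d \<le> enat (length q)" using Pxy hq unfolding P_def by simp
      moreover have "gdist G y z \<le> enat d" using diam_upper[OF yv zv] D by simp
      ultimately have "P y z" using q yv zv unfolding P_def by simp
      then show ?thesis using w z_def by auto
    qed
    define H where "H = {x. \<exists>y. P x y}"
    have clos: "tail G e \<in> H" if a1: "e \<in> arcs G" and a2: "head G e \<in> H" for e
    proof -
      obtain y where Pxy: "P (head G e) y" using a2 H_def by auto
      obtain z where "P y z" using Step[OF Pxy] by auto
      moreover obtain a where a: "a \<in> arcs G" "tail G a = y" "head G a = head G e" using FC[OF Pxy] by auto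
      have "e = a" using FA[OF Pxy a1 a(1)] a by simp
      ultimately show ?thesis using a H_def by auto
    qed
    obtain u0 v0 where u0: "u0 \<in> verts G" "v0 \<in> verts G" "gdist G u0 v0 = diameter G" using diam_att by auto
    then have Pu0: "P u0 v0" using D unfolding P_def by simp
    have allH: "x \<in> H" if "x \<in> verts G" for x
    proof -
      have "x \<rightarrow>\<^sup>* u0" using sc that u0 unfolding strongly_connected_def by auto
      then show ?thesis
      proof (induction rule: converse_reachable_induct)
        case base then show ?case using Pu0 H_def by auto
      next
        case (step x y)
        then obtain e where "e \<in> arcs G" "tail G e = x" "head G e = y" by auto
        then show ?case using clos step.IH by metis
      qed
    qed
    have iu: inu unfolding inu_def
    proof
      fix x assume "x \<in> verts G"
      then obtain y where Pxy: "P x y" using allH H_def by auto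
      obtain a where a: "a \<in> arcs G" "tail G a = y" "head G a = x" using FC[OF Pxy] by auto
      show "\<exists>!a. a \<in> arcs G \<and> head G a = x"
        using a FA[OF Pxy _ a(1) _ a(2)] by metis
    qed
    have hbij: "bij_betw (head G) (arcs G) (verts G)"
      unfolding bij_betw_def inj_on_def using iu unfolding inu_def
      by (auto intro: head_in_verts)
    have timg: "tail G ` arcs G = verts G"
    proof
      show "tail G ` arcs G \<subseteq> verts G" by auto
    next
      show "verts G \<subseteq> tail G ` arcs G"
      proof
        fix x assume xv: "x \<in> verts G"
        have "u0 \<noteq> v0" using FB[OF Pu0] .
        then obtain w where w: "w \<in> verts G" "w \<noteq> x" using u0 by metis
        have "x \<rightarrow>\<^sup>* w" using sc xv w unfolding strongly_connected_def by auto
        then obtain q where q: "awalk x q w" using reachable_awalk by auto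
        have "q \<noteq> []" using q w by (auto simp: awalk_Nil_iff)
        then have "tail G (hd q) = x" "hd q \<in> arcs G" using q cas_ends unfolding awalk_def by auto
        then show "x \<in> tail G ` arcs G" by (metis image_eqI)
      qed
    qed
    have "card (tail G ` arcs G) = card (arcs G)"
      using timg bij_betw_same_card[OF hbij] by simp
    then have "inj_on (tail G) (arcs G)" using inj_on_iff_eq_card finite_arcs by blast
    then have ou: outu unfolding outu_def using timg by (auto simp: inj_on_def) (metis imageE)
    show ?thesis using ou iu by simp
  qed
qed

end
context sc begin



lemma Suc_mod_lt: "(k::nat) < n \<Longrightarrow> Suc k mod n = (if Suc k = n then 0 else Suc k)"
  by auto

lemma partI:
  assumes "directed_cycle G"
  shows "outu \<and> inu"
proof -
  obtain n vs es where n: "n \<ge> 1" and bv: "bij_betw vs {0..<n} (verts G)" and be: "bij_betw es {0..<n} (arcs G)"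
    and th: "\<And>i. i < n \<Longrightarrow> tail G (es i) = vs i \<and> head G (es i) = vs (Suc i mod n)"
    using assms unfolding directed_cycle_def by blast
  have iv: "inj_on vs {0..<n}" and vim: "vs ` {0..<n} = verts G" using bv by (auto simp: bij_betw_def)
  have ie: "inj_on es {0..<n}" and eim: "es ` {0..<n} = arcs G" using be by (auto simp: bij_betw_def)
  have ou: outu unfolding outu_def
  proof
    fix x assume "x \<in> verts G"
    then obtain i where i: "i < n" "x = vs i" using vim by force
    show "\<exists>!a. a \<in> arcs G \<and> tail G a = x"
    proof
      show "es i \<in> arcs G \<and> tail G (es i) = x" using i th eim by auto
    next
      fix a assume a: "a \<in> arcs G \<and> tail G a = x"
      then obtain j where j: "j < n" "a = es j" using eim by force
      have "vs j = vs i" using th[OF j(1)] a i j by simp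
      then have "j = i" using iv i j by (auto simp: inj_on_def)
      then show "a = es i" using j by simp
    qed
  qed
  have iu: inu unfolding inu_def
  proof
    fix x assume "x \<in> verts G"
    then obtain i where i: "i < n" "x = vs i" using vim by force
    define j where "j = (if i = 0 then n - 1 else i - 1)"
    have j: "j < n" "Suc j mod n = i" using i n unfolding j_def by auto
    show "\<exists>!a. a \<in> arcs G \<and> head G a = x"
    proof
      show "es j \<in> arcs G \<and> head G (es j) = x" using j th[OF j(1)] eim i by auto
    next
      fix a assume a: "a \<in> arcs G \<and> head G a = x"
      then obtain j' where j': "j' < n" "a = es j'" using eim by force
      have "vs (Suc j' mod n) = vs i" using th[OF j'(1)] a i j' by simp
      moreover have "Suc j' mod n < n" using n by simp
      ultimately have "Suc j' mod n = i" using iv i by (auto simp: inj_on_def)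
      then have "Suc j' mod n = Suc j mod n" using j by simp
      then have "j' = j" using j(1) j'(1) unfolding Suc_mod_lt[OF j(1)] Suc_mod_lt[OF j'(1)]
        by (auto split: if_splits)
      then show "a = es j" using j' by simp
    qed
  qed
  show ?thesis using ou iu by simp
qed

lemma partII:
  assumes ou: outu and iu: inu
  shows "directed_cycle G"
proof -
  define out where "out x = (THE a. a \<in> arcs G \<and> tail G a = x)" for x
  define \<sigma> where "\<sigma> x = head G (out x)" for x
  have out: "out x \<in> arcs G \<and> tail G (out x) = x" if "x \<in> verts G" for x
  proof -
    have "\<exists>!a. a \<in> arcs G \<and> tail G a = x" using ou that unfolding outu_def by blast
    then show ?thesis unfolding out_def by (rule theI')
  qed
  have out_tail: "out (tail G a) = a" if "a \<in> arcs G" for a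
  proof -
    have "\<exists>!b. b \<in> arcs G \<and> tail G b = tail G a" using ou tail_in_verts[OF that] unfolding outu_def by blast
    then show ?thesis unfolding out_def using that by (intro the1_equality) auto
  qed
  have sv: "\<sigma> x \<in> verts G" if "x \<in> verts G" for x using out[OF that] \<sigma>_def by auto
  have sinj: "inj_on \<sigma> (verts G)"
  proof (rule inj_onI)
    fix x y assume x: "x \<in> verts G" and y: "y \<in> verts G" and e: "\<sigma> x = \<sigma> y"
    have "\<exists>!a. a \<in> arcs G \<and> head G a = \<sigma> x" using iu sv[OF x] unfolding inu_def by blast
    then have "out x = out y" using out[OF x] out[OF y] e \<sigma>_def by metis
    then show "x = y" using out[OF x] out[OF y] by metis
  qed
  obtain u where u: "u \<in> verts G" using verts_ne by auto
  define vs where "vs i = (\<sigma> ^^ i) u" for i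
  have vsv: "vs i \<in> verts G" for i unfolding vs_def by (induction i) (auto simp: u sv)
  have vsS: "vs (Suc i) = \<sigma> (vs i)" for i unfolding vs_def by simp
  have orbit: "\<exists>i. v = vs i" if "v \<in> verts G" for v
  proof -
    have "u \<rightarrow>\<^sup>* v" using sc u that unfolding strongly_connected_def by auto
    then show ?thesis
    proof (induction rule: reachable_induct)
      case base then show ?case by (intro exI[of _ 0]) (simp add: vs_def)
    next
      case (step x y)
      then obtain i where i: "x = vs i" by auto
      obtain a where a: "a \<in> arcs G" "tail G a = x" "head G a = y" using step.hyps(2) by auto
      have "out x = a" using out_tail[OF a(1)] a by simp
      then have "y = vs (Suc i)" using vsS i a \<sigma>_def by simp
      then show ?case by blast
    qed
  qed
  have cancel: "vs (i + k) = vs i \<Longrightarrow> vs k = u" for i k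
  proof (induction i)
    case 0 then show ?case by (simp add: vs_def)
  next
    case (Suc i)
    have "\<sigma> (vs (i + k)) = \<sigma> (vs i)" using Suc.prems vsS by (metis add_Suc)
    then have "vs (i + k) = vs i" using sinj vsv by (auto simp: inj_on_def)
    then show ?case by (rule Suc.IH)
  qed
  have per: "vs m = vs (m mod k)" if k: "vs k = u" for m k
  proof -
    have kq: "vs (k * q + r) = vs r" for q r
    proof (induction q)
      case 0 then show ?case by simp
    next
      case (Suc q)
      have e: "k * Suc q + r = (k * q + r) + k" by simp
      have "vs (k * Suc q + r) = (\<sigma> ^^ (k * q + r)) ((\<sigma> ^^ k) u)"
        unfolding vs_def e by (simp only: funpow_add comp_apply)
      also have "\<dots> = vs (k * q + r)" using k unfolding vs_def by simp
      finally show ?case using Suc.IH by simp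
    qed
    have "m = k * (m div k) + m mod k" by simp
    then show ?thesis using kq by metis
  qed
  define n where "n = card (verts G)"
  have n1: "n \<ge> 1" using verts_ne finite_verts unfolding n_def by (simp add: Suc_le_eq card_gt_0_iff)
  have vinj: "inj_on vs {0..<n}"
  proof (rule ccontr)
    assume "\<not> inj_on vs {0..<n}"
    then obtain i j where ij: "i < j" "j < n" "vs i = vs j"
      unfolding inj_on_def by (metis atLeastLessThan_iff linorder_neqE_nat)
    define k where "k = j - i"
    have k: "k > 0" "k < n" using ij k_def by auto
    have "vs (i + k) = vs i" using ij k_def by simp
    then have vk: "vs k = u" by (rule cancel)
    have "verts G \<subseteq> vs ` {0..<k}"
    proof
      fix v assume "v \<in> verts G"
      then obtain m where "v = vs m" using orbit by blast
      then have "v = vs (m mod k)" using per[OF vk] by simp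
      moreover have "m mod k < k" using k by simp
      ultimately show "v \<in> vs ` {0..<k}" by auto
    qed
    then have "n \<le> card (vs ` {0..<k})" unfolding n_def by (intro card_mono) auto
    also have "\<dots> \<le> k" using card_image_le[of "{0..<k}" vs] by simp
    finally show False using k by simp
  qed
  have vimg: "vs ` {0..<n} = verts G"
  proof (rule card_subset_eq)
    show "finite (verts G)" by simp
    show "vs ` {0..<n} \<subseteq> verts G" using vsv by auto
    show "card (vs ` {0..<n}) = card (verts G)" using card_image[OF vinj] n_def by simp
  qed
  have vbij: "bij_betw vs {0..<n} (verts G)" using vinj vimg by (simp add: bij_betw_def)
  have vn: "vs n = u"
  proof -
    obtain j where j: "j < n" "vs n = vs j" using vimg vsv[of n] by (metis atLeastLessThan_iff imageE)
    have "vs (j + (n - j)) = vs j" using j by simp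
    then have c: "vs (n - j) = u" by (rule cancel)
    show ?thesis
    proof (cases "j = 0")
      case True then show ?thesis using j by (simp add: vs_def)
    next
      case False
      then have "n - j < n" "n - j \<noteq> 0" using j by auto
      moreover have "vs (n - j) = vs 0" using c by (simp add: vs_def)
      ultimately have False using vinj n1 unfolding inj_on_def by (metis atLeastLessThan_iff zero_le less_le_trans zero_less_one le_less_trans not_less)
      then show ?thesis ..
    qed
  qed
  have obij: "bij_betw out (verts G) (arcs G)"
    unfolding bij_betw_def
  proof
    show "inj_on out (verts G)" using out by (metis inj_onI)
    show "out ` verts G = arcs G"
    proof
      show "out ` verts G \<subseteq> arcs G" using out by auto
      show "arcs G \<subseteq> out ` verts G" using out_tail tail_in_verts by (metis image_eqI subsetI)
    qed
  qed
  define es where "es i = out (vs i)" for i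
  have ebij: "bij_betw es {0..<n} (arcs G)"
    using bij_betw_trans[OF vbij obij] unfolding es_def comp_def by simp
  have th: "tail G (es i) = vs i \<and> head G (es i) = vs (Suc i mod n)" if "i < n" for i
  proof -
    have t: "tail G (es i) = vs i" using out[OF vsv[of i]] es_def by simp
    have h: "head G (es i) = vs (Suc i)" using vsS \<sigma>_def es_def by simp
    have "vs (Suc i mod n) = vs (Suc i)"
    proof (cases "Suc i = n")
      case True then show ?thesis using vn by (simp add: vs_def)
    next
      case False then show ?thesis using that by simp
    qed
    then show ?thesis using t h by simp
  qed
  show ?thesis unfolding directed_cycle_def using n1 vbij ebij th by blast
qed

end

theorem proposition2p1:
  fixes G :: "('a,'b) pre_digraph"
  assumes "fin_digraph G"
    and "strongly_connected G"
    and "arcs G \<noteq> {}"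
  shows "diameter (line_digraph G) = diameter G \<longleftrightarrow> directed_cycle G"
proof -
  have "sc G" unfolding sc_def sc_axioms_def using assms by auto
  then interpret sc G .
  show ?thesis using partIII partIV partI partII by blast
qed

end
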